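(* $$D_{\mathbb{R},2}\ge D_{\mathbb{R},2}(\ell_\infty^2)=\sup\left\{\left[2t^{4/3}+\left(2\sqrt{t(1-t)}\right)^{4/3}\right]^{3/4}: t\in[1/2,1]\right\}\approx1.8374.$$
   Context: $\ell_\infty^n$ is $\mathbb{R}^n$ with the sup norm; for a polynomial $P$ on $\ell_\infty^n$, $\|P\|=\sup_{x\in[-1,1]^n}|P(x)|$. For $P(x)=\sum_{|\alpha|=m}a_\alpha x^\alpha$ an $m$-homogeneous polynomial, write $\|P\|_{\mathrm{coef}}=\big(\sum_{|\alpha|=m}|a_\alpha|^{\frac{2m}{m+1}}\big)^{\frac{m+1}{2m}}$. $D_{\mathbb{R},m}(\ell_\infty^n)=\sup\{\|P\|_{\mathrm{coef}}/\|P\|: P\neq0 \text{ real $m$-homogeneous on }\ell_\infty^n\}$, and $D_{\mathbb{R},m}=\sup_n D_{\mathbb{R},m}(\ell_\infty^n)$ is the optimal constant in the real polynomial Bohnenblust–Hille inequality $\|P\|_{\mathrm{coef}}\le D\|P\|$. *)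

theory Defs
  imports "HOL-Analysis.Analysis"
begin

text \<open>Multi-indices \<alpha> in N^n with |\<alpha>| = m, encoded as functions nat => nat
  vanishing outside {0..<n}.\<close>
definition multi_idx :: "nat \<Rightarrow> nat \<Rightarrow> (nat \<Rightarrow> nat) set" where
  "multi_idx n m = {\<alpha>. (\<forall>i\<ge>n. \<alpha> i = 0) \<and> (\<Sum>i<n. \<alpha> i) = m}"

text \<open>The m-homogeneous polynomial on R^n with coefficients a (only a restricted
  to multi_idx n m matters), evaluated at x (only x 0 .. x (n-1) matter).\<close>
definition hpoly_eval :: "nat \<Rightarrow> nat \<Rightarrow> ((nat \<Rightarrow> nat) \<Rightarrow> real) \<Rightarrow> (nat \<Rightarrow> real) \<Rightarrow> real" where
  "hpoly_eval n m a x = (\<Sum>\<alpha>\<in>multi_idx n m. a \<alpha> * (\<Prod>i<n. x i ^ \<alpha> i))"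

definition hpoly_norm :: "nat \<Rightarrow> nat \<Rightarrow> ((nat \<Rightarrow> nat) \<Rightarrow> real) \<Rightarrow> real" where
  "hpoly_norm n m a = (SUP x\<in>{x. \<forall>i<n. \<bar>x i\<bar> \<le> 1}. \<bar>hpoly_eval n m a x\<bar>)"

definition hpoly_coef_norm :: "nat \<Rightarrow> nat \<Rightarrow> ((nat \<Rightarrow> nat) \<Rightarrow> real) \<Rightarrow> real" where
  "hpoly_coef_norm n m a =
     (\<Sum>\<alpha>\<in>multi_idx n m. \<bar>a \<alpha>\<bar> powr (2 * real m / (real m + 1)))
       powr ((real m + 1) / (2 * real m))"

definition BH_const_n :: "nat \<Rightarrow> nat \<Rightarrow> ereal" where
  "BH_const_n m n = (SUP a\<in>{a. \<exists>\<alpha>\<in>multi_idx n m. a \<alpha> \<noteq> 0}.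
       ereal (hpoly_coef_norm n m a / hpoly_norm n m a))"

definition BH_const :: "nat \<Rightarrow> ereal" where
  "BH_const m = (SUP n. BH_const_n m n)"

end

theory Submission
  imports Defs
begin


definition phi :: "real \<Rightarrow> real" where
  "phi t = 2 * t powr (4/3) + (2 * sqrt (t * (1 - t))) powr (4/3)"

lemma cube_powr: "0 \<le> x \<Longrightarrow> (x powr (1/3)) ^ 3 = (x::real)"
  by (cases "x = 0") (simp_all add: powr_power)

lemma two_thirds_cube: "0 \<le> w \<Longrightarrow> (w powr (2/3)) ^ 3 = (w::real)^2"
proof (cases "w = 0")
  case False
  assume "0 \<le> w"
  hence "(w powr (2/3)) ^ 3 = w powr 2" using False by (simp add: powr_power)
  also have "\<dots> = w^2" using False \<open>0 \<le> w\<close> powr_realpow[of w 2] by simp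
  finally show ?thesis .
qed simp

lemma four_thirds_sq: "0 \<le> w \<Longrightarrow> (w::real) powr (4/3) = (w powr (2/3))^2"
  by (cases "w = 0") (simp_all add: powr_power)

lemma four_thirds_mul: "0 \<le> w \<Longrightarrow> (w::real) powr (4/3) = w * w powr (1/3)"
proof (cases "w = 0")
  case False
  assume "0 \<le> w"
  have "w powr (4/3) = w powr (1 + 1/3)" by simp
  also have "\<dots> = w powr 1 * w powr (1/3)" by (rule powr_add)
  finally show ?thesis using \<open>0 \<le> w\<close> by simp
qed simp

lemma phi_upper:
  assumes t: "1/2 \<le> t" "t \<le> 1"
  shows "phi t \<le> 22505/10000"
proof -
  define y where "y = t powr (1/3)"
  have y0: "0 \<le> y" unfolding y_def by simp
  have y3: "y^3 = t" unfolding y_def using t by (simp add: cube_powr)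
  have "0 \<le> (y - 477/500)^2 * (y + 2*(477/500))" using y0 by simp
  hence ty: "y \<le> 477/500 + (t - (477/500)^3) / (3*(477/500)^2)"
    unfolding y3[symmetric] by (simp add: algebra_simps power2_eq_square power3_eq_cube field_simps)
  define w where "w = 2 * sqrt (t * (1 - t))"
  have w0: "0 \<le> w" unfolding w_def using t by simp
  have w2: "w^2 = 4 * t * (1 - t)" unfolding w_def using t by (simp add: power_mult_distrib)
  define z where "z = w powr (2/3)"
  have z0: "0 \<le> z" unfolding z_def by simp
  have z3: "z^3 = 4 * t * (1 - t)" unfolding z_def using two_thirds_cube[OF w0] w2 by simp
  have "0 \<le> (z - 1543/2000)^2 * (2*z + 1543/2000)" using z0 by simp
  hence tz: "z^2 \<le> (1543/2000)^2 + 2/(3*(1543/2000)) * (4 * t * (1 - t) - (1543/2000)^3)"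
    unfolding z3[symmetric] by (simp add: algebra_simps power2_eq_square power3_eq_cube field_simps)
  have "phi t = 2 * (t * y) + z^2"
    unfolding phi_def y_def z_def w_def[symmetric]
    using four_thirds_mul[of t] four_thirds_sq[OF w0] t by simp
  also have "\<dots> \<le> 2 * (t * (477/500 + (t - (477/500)^3) / (3*(477/500)^2))) + ((1543/2000)^2 + 2/(3*(1543/2000)) * (4 * t * (1 - t) - (1543/2000)^3))"
    using ty tz t by (intro add_mono mult_left_mono) auto
  also have "\<dots> \<le> 22505/10000"
  proof -
    have "22505/10000 - ((-2868964000/1053231741) * t^2 + (2736011/578625) * t + 2380849/12000000)
       = (2868964000/1053231741) * (t - 622521846819/717241000000)^2 + 137397914216107/1660054294500000000"
      by (simp add: field_simps power2_eq_square)
    moreover have "0 \<le> (2868964000/1053231741) * (t - 622521846819/717241000000)^2" by simp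
    moreover have "2 * (t * (477/500 + (t - (477/500)^3) / (3*(477/500)^2))) + ((1543/2000)^2 + 2/(3*(1543/2000)) * (4 * t * (1 - t) - (1543/2000)^3))
       = (-2868964000/1053231741) * t^2 + (2736011/578625) * t + 2380849/12000000"
      by (simp add: field_simps power2_eq_square power3_eq_cube)
    ultimately show ?thesis by linarith
  qed
  finally show ?thesis .
qed


lemma phi_lower: "phi ((477/500)^3) > 225038/100000"
proof -
  define t :: real where "t = (477/500)^3"
  define y where "y = t powr (1/3)"
  have y3: "y^3 = (477/500)^3" unfolding y_def t_def by (simp add: cube_powr)
  have y: "y = 477/500" using power_eq_imp_eq_base[OF y3] unfolding y_def by simp
  have t0: "0 \<le> t" "t \<le> 1" unfolding t_def by (simp_all add: power_le_one)
  define w where "w = 2 * sqrt (t * (1 - t))"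
  have w0: "0 \<le> w" unfolding w_def using t0 by simp
  have w2: "w^2 = 4 * t * (1 - t)" unfolding w_def using t0 by (simp add: power_mult_distrib)
  define z where "z = w powr (2/3)"
  have z3: "z^3 = 4 * t * (1 - t)" unfolding z_def using two_thirds_cube[OF w0] w2 by simp
  have zz: "z^2 > 225038/100000 - 2 * (477/500)^4"
  proof (rule ccontr)
    assume "\<not> ?thesis"
    hence "z^2 \<le> 225038/100000 - 2 * (477/500)^4" by simp
    hence "(z^2)^3 \<le> (225038/100000 - 2 * (477/500)^4)^3" by (intro power_mono) simp_all
    moreover have "(z^2)^3 = (z^3)^2" by (simp flip: power_mult add: mult.commute)
    ultimately have "(4 * t * (1 - t))^2 \<le> (225038/100000 - 2 * (477/500 :: real)^4)^3"
      using z3 by simp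
    thus False unfolding t_def by (simp add: power2_eq_square power3_eq_cube eval_nat_numeral)
  qed
  have "phi t = 2 * (t * y) + z^2"
    unfolding phi_def y_def z_def w_def[symmetric]
    using four_thirds_mul[of t] four_thirds_sq[OF w0] t0 by simp
  also have "\<dots> = 2 * (477/500)^4 + z^2" unfolding y t_def by (simp add: power_def)
  finally show ?thesis using zz unfolding t_def by simp
qed



definition e20 :: "nat \<Rightarrow> nat" where "e20 = (\<lambda>i. if i = 0 then 2 else 0)"
definition e11 :: "nat \<Rightarrow> nat" where "e11 = (\<lambda>i. if i = 0 then 1 else if i = 1 then 1 else 0)"
definition e02 :: "nat \<Rightarrow> nat" where "e02 = (\<lambda>i. if i = 1 then 2 else 0)"

lemma e_distinct: "e20 \<noteq> e11" "e20 \<noteq> e02" "e11 \<noteq> e02"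
  unfolding e20_def e11_def e02_def by (metis zero_neq_numeral one_neq_zero numeral_eq_one_iff semiring_norm(85))+

lemma multi22: "multi_idx 2 2 = {e20, e11, e02}"
proof (intro equalityI subsetI)
  fix \<alpha> assume "\<alpha> \<in> multi_idx 2 2"
  hence z: "\<forall>i\<ge>2. \<alpha> i = 0" and s: "\<alpha> 0 + \<alpha> 1 = 2"
    unfolding multi_idx_def by (simp_all add: numeral_2_eq_2)
  have o: "\<alpha> i = 0" if "i \<noteq> 0" "i \<noteq> 1" for i using z that by simp
  have "\<alpha> 0 = 0 \<or> \<alpha> 0 = 1 \<or> \<alpha> 0 = 2" using s by linarith
  moreover have "\<alpha> = e02" if "\<alpha> 0 = 0"
  proof
    fix i show "\<alpha> i = e02 i" using o[of i] s that unfolding e02_def by (cases "i = 0"; cases "i = 1") auto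
  qed
  moreover have "\<alpha> = e11" if "\<alpha> 0 = 1"
  proof
    fix i show "\<alpha> i = e11 i" using o[of i] s that unfolding e11_def by (cases "i = 0"; cases "i = 1") auto
  qed
  moreover have "\<alpha> = e20" if "\<alpha> 0 = 2"
  proof
    fix i show "\<alpha> i = e20 i" using o[of i] s that unfolding e20_def by (cases "i = 0"; cases "i = 1") auto
  qed
  ultimately show "\<alpha> \<in> {e20, e11, e02}" by blast
qed (auto simp: multi_idx_def e20_def e11_def e02_def numeral_2_eq_2)

lemma eval22: "hpoly_eval 2 2 a x = a e20 * (x 0)^2 + a e11 * (x 0 * x 1) + a e02 * (x 1)^2"
  unfolding hpoly_eval_def multi22 using e_distinct
  by (simp add: numeral_2_eq_2 e20_def e11_def e02_def)

lemma coef22: "hpoly_coef_norm 2 2 a =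
  (\<bar>a e20\<bar> powr (4/3) + \<bar>a e11\<bar> powr (4/3) + \<bar>a e02\<bar> powr (4/3)) powr (3/4)"
  unfolding hpoly_coef_norm_def multi22 using e_distinct by (simp add: add.assoc)

definition ubox where "ubox = {x::nat\<Rightarrow>real. \<forall>i<2. \<bar>x i\<bar> \<le> 1}"

lemma eval_bound: assumes "x \<in> ubox" shows "\<bar>hpoly_eval 2 2 a x\<bar> \<le> \<bar>a e20\<bar> + \<bar>a e11\<bar> + \<bar>a e02\<bar>"
proof -
  have x: "\<bar>x 0\<bar> \<le> 1" "\<bar>x 1\<bar> \<le> 1" using assms by (auto simp: ubox_def)
  have a: "\<bar>x 0 ^ 2\<bar> \<le> 1" "\<bar>x 1 ^ 2\<bar> \<le> 1" "\<bar>x 0 * x 1\<bar> \<le> 1"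
    using x by (auto simp: abs_mult abs_square_le_1 intro: mult_le_one)
  have "\<bar>hpoly_eval 2 2 a x\<bar> \<le> \<bar>a e20 * (x 0)^2\<bar> + \<bar>a e11 * (x 0 * x 1)\<bar> + \<bar>a e02 * (x 1)^2\<bar>"
    unfolding eval22 by linarith
  also have "\<dots> \<le> \<bar>a e20\<bar> + \<bar>a e11\<bar> + \<bar>a e02\<bar>"
    unfolding abs_mult using a abs_mult[of "x 0" "x 1"]
    by (intro add_mono mult_left_le) auto
  finally show ?thesis .
qed

lemma bdd22: "bdd_above ((\<lambda>x. \<bar>hpoly_eval 2 2 a x\<bar>) ` ubox)"
  using eval_bound by (intro bdd_aboveI2) 

lemma norm_ge: "x \<in> ubox \<Longrightarrow> \<bar>hpoly_eval 2 2 a x\<bar> \<le> hpoly_norm 2 2 a"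
  unfolding hpoly_norm_def ubox_def[symmetric] by (rule cSUP_upper[OF _ bdd22])

lemma norm_le: "(\<And>x. x \<in> ubox \<Longrightarrow> \<bar>hpoly_eval 2 2 a x\<bar> \<le> M) \<Longrightarrow> hpoly_norm 2 2 a \<le> M"
  unfolding hpoly_norm_def ubox_def[symmetric]
  by (rule cSUP_least) (auto simp: ubox_def intro!: exI[of _ "\<lambda>_. 0"])

lemma pt_box: "\<bar>u\<bar> \<le> 1 \<Longrightarrow> \<bar>v\<bar> \<le> 1 \<Longrightarrow> (\<lambda>i. if i = 0 then u else v) \<in> ubox"
  by (auto simp: ubox_def)

lemma norm_ge2: "\<bar>u\<bar> \<le> 1 \<Longrightarrow> \<bar>v\<bar> \<le> 1 \<Longrightarrow>
   \<bar>a e20 * u^2 + a e11 * (u * v) + a e02 * v^2\<bar> \<le> hpoly_norm 2 2 a"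
  using norm_ge[OF pt_box, of u v a] by (simp add: eval22)



lemma quadC:
  fixes A B C :: real
  assumes H: "\<And>x y. \<bar>x\<bar> \<le> 1 \<Longrightarrow> \<bar>y\<bar> \<le> 1 \<Longrightarrow> \<bar>A*x^2 + C*(x*y) + B*y^2\<bar> \<le> 1"
    and AB: "A*B < 0" and C1: "\<bar>C\<bar> \<le> 1" and B2: "\<bar>B\<bar> > 1/2"
  shows "C^2 \<le> 4*\<bar>B\<bar>*(1-\<bar>A\<bar>)"
proof -
  have B0: "B \<noteq> 0" using AB by auto
  have "\<bar>-C/(2*B)\<bar> = \<bar>C\<bar> / (2*\<bar>B\<bar>)" by (simp add: abs_div abs_mult)
  also have "\<dots> \<le> 1" using C1 B2 by (simp add: pos_divide_le_eq)
  finally have y0: "\<bar>-C/(2*B)\<bar> \<le> 1" .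
  have eq: "A*1^2 + C*(1*(-C/(2*B))) + B*(-C/(2*B))^2 = A - C^2/(4*B)"
    using B0 by (simp add: field_simps power2_eq_square)
  have "\<bar>A*1^2 + C*(1*(-C/(2*B))) + B*(-C/(2*B))^2\<bar> \<le> 1" by (rule H[OF _ y0]) simp
  hence v: "\<bar>A - C^2/(4*B)\<bar> \<le> 1" unfolding eq .
  show ?thesis
  proof (cases "A > 0")
    case True
    hence Bn: "B < 0" using AB by (simp add: mult_less_0_iff)
    have "C^2/(4*B) \<le> 0" using Bn by (simp add: divide_nonneg_neg)
    hence "C^2/(4*(-B)) \<le> 1 - A" using v by (simp add: abs_le_iff)
    moreover have "0 < 4*(-B)" using Bn by simp
    ultimately have "C^2 \<le> (1 - A) * (4*(-B))" by (metis pos_divide_le_eq)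
    thus ?thesis using True Bn by (simp add: algebra_simps)
  next
    case False
    hence An: "A < 0" and Bp: "B > 0" using AB by (auto simp: mult_less_0_iff)
    have "C^2/(4*B) \<le> 1 + A" using v by (simp add: abs_le_iff)
    moreover have "0 < 4*B" using Bp by simp
    ultimately have "C^2 \<le> (1 + A) * (4*B)" by (metis pos_divide_le_eq)
    thus ?thesis using An Bp by (simp add: algebra_simps)
  qed
qed

lemma pw43: "0 \<le> u \<Longrightarrow> u \<le> 1 \<Longrightarrow> (u::real) powr (4/3) \<le> u"
  by (cases "u = 0") (auto intro: powr_le_one_le)

lemma keyK:
  fixes A B C :: real
  assumes H: "\<And>x y. \<bar>x\<bar> \<le> 1 \<Longrightarrow> \<bar>y\<bar> \<le> 1 \<Longrightarrow> \<bar>A*x^2 + C*(x*y) + B*y^2\<bar> \<le> 1"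
  shows "\<bar>A\<bar> powr (4/3) + \<bar>C\<bar> powr (4/3) + \<bar>B\<bar> powr (4/3) \<le> 2 \<or>
    (\<exists>m\<in>{1/2..1}. \<bar>A\<bar> powr (4/3) + \<bar>C\<bar> powr (4/3) + \<bar>B\<bar> powr (4/3) \<le> phi m)"
proof -
  have hA: "\<bar>A\<bar> \<le> 1" using H[of 1 0] by simp
  have hB: "\<bar>B\<bar> \<le> 1" using H[of 0 1] by simp
  have h1: "\<bar>A + C + B\<bar> \<le> 1" using H[of 1 1] by simp
  have h2: "\<bar>A - C + B\<bar> \<le> 1" using H[of 1 "-1"] by simp
  have H': "\<And>x y. \<bar>x\<bar> \<le> 1 \<Longrightarrow> \<bar>y\<bar> \<le> 1 \<Longrightarrow> \<bar>B*x^2 + C*(x*y) + A*y^2\<bar> \<le> 1"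
  proof -
    fix x y :: real assume "\<bar>x\<bar> \<le> 1" "\<bar>y\<bar> \<le> 1"
    from H[OF this(2,1)] show "\<bar>B*x^2 + C*(x*y) + A*y^2\<bar> \<le> 1" by (simp add: algebra_simps)
  qed
  define F where "F = \<bar>A\<bar> powr (4/3) + \<bar>C\<bar> powr (4/3) + \<bar>B\<bar> powr (4/3)"
  have Fle: "F \<le> \<bar>A\<bar> + \<bar>C\<bar> + \<bar>B\<bar>" if "\<bar>C\<bar> \<le> 1"
    unfolding F_def using pw43[of "\<bar>A\<bar>"] pw43[of "\<bar>B\<bar>"] pw43[of "\<bar>C\<bar>"] hA hB that by simp
  show ?thesis
  proof (cases "A*B \<ge> 0")
    case True
    have "\<bar>A\<bar> + \<bar>C\<bar> + \<bar>B\<bar> \<le> 1"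
    proof (cases "A \<ge> 0 \<and> B \<ge> 0")
      case True thus ?thesis using h1 h2 by (auto simp: abs_le_iff)
    next
      case False
      hence "A \<le> 0 \<and> B \<le> 0" using \<open>A*B \<ge> 0\<close> by (auto simp: zero_le_mult_iff)
      thus ?thesis using h1 h2 by (auto simp: abs_le_iff)
    qed
    moreover have "\<bar>C\<bar> \<le> 1" using calculation by simp
    ultimately have "F \<le> 2" using Fle by linarith
    thus ?thesis unfolding F_def by simp
  next
    case False
    hence AB: "A*B < 0" by simp
    have sg: "(A > 0 \<and> B < 0) \<or> (A < 0 \<and> B > 0)" using AB by (auto simp: mult_less_0_iff)
    have hC: "\<bar>C\<bar> \<le> 1 - \<bar>\<bar>A\<bar> - \<bar>B\<bar>\<bar>" using sg h1 h2 by (auto simp: abs_le_iff)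
    show ?thesis
    proof (cases "\<bar>A\<bar> \<le> 1/2 \<or> \<bar>B\<bar> \<le> 1/2")
      case True
      hence "\<bar>A\<bar> + \<bar>C\<bar> + \<bar>B\<bar> \<le> 2"
        using hC abs_ge_self[of "\<bar>A\<bar> - \<bar>B\<bar>"] abs_ge_minus_self[of "\<bar>A\<bar> - \<bar>B\<bar>"] by linarith
      moreover have "\<bar>C\<bar> \<le> 1" using hC abs_ge_zero[of "\<bar>A\<bar> - \<bar>B\<bar>"] by linarith
      ultimately have "F \<le> 2" using Fle by linarith
      thus ?thesis unfolding F_def by simp
    next
      case False
      have C1: "\<bar>C\<bar> \<le> 1" using hC by simp
      have c1: "C^2 \<le> 4*\<bar>B\<bar>*(1-\<bar>A\<bar>)" using quadC[OF H AB C1] False by simp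
      have c2: "C^2 \<le> 4*\<bar>A\<bar>*(1-\<bar>B\<bar>)" using quadC[OF H' _ C1] AB False by (simp add: mult.commute)
      define m where "m = max \<bar>A\<bar> \<bar>B\<bar>"
      have m: "1/2 \<le> m" "m \<le> 1" unfolding m_def using False hA hB by auto
      have cm: "C^2 \<le> 4*m*(1-m)"
      proof (cases "\<bar>A\<bar> \<ge> \<bar>B\<bar>")
        case True
        have "4*\<bar>B\<bar>*(1-\<bar>A\<bar>) \<le> 4*\<bar>A\<bar>*(1-\<bar>A\<bar>)" using True hA by (intro mult_right_mono) auto
        thus ?thesis using c1 True unfolding m_def by simp
      next
        case False
        have "4*\<bar>A\<bar>*(1-\<bar>B\<bar>) \<le> 4*\<bar>B\<bar>*(1-\<bar>B\<bar>)" using False hB by (intro mult_right_mono) auto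
        thus ?thesis using c2 False unfolding m_def by simp
      qed
      have sq: "(2 * sqrt (m * (1 - m)))^2 = 4*m*(1-m)" using m by (simp add: power_mult_distrib)
      have Cm: "\<bar>C\<bar> \<le> 2 * sqrt (m * (1 - m))"
      proof -
        have "\<bar>C\<bar>^2 \<le> (2 * sqrt (m * (1 - m)))^2" using cm sq by simp
        moreover have "0 \<le> 2 * sqrt (m * (1 - m))" using m by simp
        ultimately show ?thesis by (rule power2_le_imp_le)
      qed
      have "F \<le> m powr (4/3) + (2 * sqrt (m * (1 - m))) powr (4/3) + m powr (4/3)"
        unfolding F_def using Cm unfolding m_def by (intro add_mono powr_mono2) auto
      hence "F \<le> phi m" unfolding phi_def by simp
      thus ?thesis using m unfolding F_def by auto
    qed
  qed
qed



lemma powr34_ge: "0 < c \<Longrightarrow> 0 \<le> L \<Longrightarrow> L^4 \<le> c^3 \<Longrightarrow> L \<le> (c::real) powr (3/4)"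
proof -
  assume c: "0 < c" and L: "0 \<le> L" and le: "L^4 \<le> c^3"
  have "(c powr (3/4))^4 = c powr 3" using c by (simp add: powr_power)
  also have "\<dots> = c^3" using c powr_realpow[of c 3] by simp
  finally have e: "(c powr (3/4))^4 = c^3" .
  show ?thesis
  proof (rule ccontr)
    assume "\<not> ?thesis"
    hence "(c powr (3/4))^4 < L^4" by (intro power_strict_mono) auto
    thus False using e le by simp
  qed
qed

lemma powr34_lt: "0 < c \<Longrightarrow> 0 \<le> U \<Longrightarrow> c^3 < U^4 \<Longrightarrow> (c::real) powr (3/4) < U"
proof -
  assume c: "0 < c" and U: "0 \<le> U" and le: "c^3 < U^4"
  have "(c powr (3/4))^4 = c powr 3" using c by (simp add: powr_power)
  also have "\<dots> = c^3" using c powr_realpow[of c 3] by simp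
  finally have "(c powr (3/4))^4 < U^4" using le by simp
  from power_less_imp_less_base[OF this U] show ?thesis .
qed

lemma phi_nonneg: "0 \<le> phi t" unfolding phi_def by simp

lemma poly_ext:
  assumes t: "1/2 \<le> t" "t \<le> 1" and x: "\<bar>x\<bar> \<le> 1" and y: "\<bar>y\<bar> \<le> 1"
  shows "\<bar>t * x^2 + 2 * sqrt (t * (1 - t)) * (x * y) + (-t) * y^2\<bar> \<le> 1"
proof -
  define s where "s = sqrt (t * (1 - t))"
  have s2: "s^2 = t * (1 - t)" unfolding s_def using t by simp
  define P where "P = t * x^2 + 2 * s * (x * y) + (-t) * y^2"
  have e1: "t*P - (t*x^2 - (t*y - s*x)^2) = x^2*(s^2 - t*(1-t))"
    unfolding P_def by (simp add: algebra_simps power2_eq_square)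
  have e2: "t*P - ((t*x + s*y)^2 - t*y^2) = y^2*(t*(1-t) - s^2)"
    unfolding P_def by (simp add: algebra_simps power2_eq_square)
  have "t*P = t*x^2 - (t*y - s*x)^2" using e1 s2 by simp
  hence "t*P \<le> t*x^2" using zero_le_power2[of "t*y - s*x"] by linarith
  hence u: "P \<le> x^2" using t by simp
  have "t*P = (t*x + s*y)^2 - t*y^2" using e2 s2 by simp
  hence "t * (- (y^2)) \<le> t*P" using zero_le_power2[of "t*x + s*y"] by linarith
  hence l: "- (y^2) \<le> P" by (rule mult_left_le_imp_le) (use t in simp)
  have "x^2 \<le> 1" "y^2 \<le> 1" using x y by (simp_all add: abs_square_le_1)
  with u l have "\<bar>P\<bar> \<le> 1" by (simp add: abs_le_iff)
  thus ?thesis unfolding P_def s_def .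
qed


lemma ratio_bound:
  assumes nz: "\<exists>\<alpha>\<in>multi_idx 2 2. a \<alpha> \<noteq> 0"
    and S: "\<And>m. m \<in> {1/2..1} \<Longrightarrow> phi m powr (3/4) \<le> S"
  shows "hpoly_coef_norm 2 2 a / hpoly_norm 2 2 a \<le> S"
proof -
  define A where "A = a e20"
  define C where "C = a e11"
  define B where "B = a e02"
  define N where "N = hpoly_norm 2 2 a"
  have HN: "\<bar>A*x^2 + C*(x*y) + B*y^2\<bar> \<le> N" if "\<bar>x\<bar> \<le> 1" "\<bar>y\<bar> \<le> 1" for x y
    using norm_ge2[OF that, of a] unfolding A_def B_def C_def N_def .
  have nz': "A \<noteq> 0 \<or> C \<noteq> 0 \<or> B \<noteq> 0" using nz unfolding multi22 A_def B_def C_def by auto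
  have N0: "N > 0"
  proof (rule ccontr)
    assume "\<not> N > 0"
    hence "A = 0" "B = 0" "A + C + B = 0" using HN[of 1 0] HN[of 0 1] HN[of 1 1] by auto
    thus False using nz' by simp
  qed
  have H1: "\<bar>(A/N)*x^2 + (C/N)*(x*y) + (B/N)*y^2\<bar> \<le> 1" if "\<bar>x\<bar> \<le> 1" "\<bar>y\<bar> \<le> 1" for x y
  proof -
    have "(A/N)*x^2 + (C/N)*(x*y) + (B/N)*y^2 = (A*x^2 + C*(x*y) + B*y^2) / N"
      by (simp add: add_divide_distrib)
    thus ?thesis using HN[OF that] N0 by (simp add: abs_div pos_divide_le_eq)
  qed
  define F where "F = \<bar>A/N\<bar> powr (4/3) + \<bar>C/N\<bar> powr (4/3) + \<bar>B/N\<bar> powr (4/3)"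
  have F0: "0 \<le> F" unfolding F_def by simp
  have FS: "F powr (3/4) \<le> S"
  proof -
    from keyK[OF H1] have "F \<le> 2 \<or> (\<exists>m\<in>{1/2..1}. F \<le> phi m)" unfolding F_def .
    thus ?thesis
    proof
      assume "F \<le> 2"
      hence "F powr (3/4) \<le> phi 1 powr (3/4)" using F0 by (intro powr_mono2) (simp_all add: phi_def)
      thus ?thesis using S[of 1] by simp
    next
      assume "\<exists>m\<in>{1/2..1}. F \<le> phi m"
      then obtain m where m: "m \<in> {1/2..1}" "F \<le> phi m" by blast
      hence "F powr (3/4) \<le> phi m powr (3/4)" using F0 by (intro powr_mono2) simp_all
      thus ?thesis using S[OF m(1)] by simp
    qed
  qed
  have "F = (\<bar>A\<bar> powr (4/3) + \<bar>C\<bar> powr (4/3) + \<bar>B\<bar> powr (4/3)) / N powr (4/3)"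
    unfolding F_def using N0 by (simp add: abs_div powr_divide add_divide_distrib)
  hence "F powr (3/4) = (\<bar>A\<bar> powr (4/3) + \<bar>C\<bar> powr (4/3) + \<bar>B\<bar> powr (4/3)) powr (3/4) / N"
    using N0 by (simp add: powr_divide powr_powr)
  hence "hpoly_coef_norm 2 2 a / N = F powr (3/4)"
    unfolding coef22 A_def B_def C_def by simp
  thus ?thesis using FS unfolding N_def by simp
qed

definition apoly :: "real \<Rightarrow> (nat \<Rightarrow> nat) \<Rightarrow> real" where
  "apoly t = (\<lambda>\<alpha>. if \<alpha> = e20 then t else if \<alpha> = e11 then 2 * sqrt (t * (1 - t)) else if \<alpha> = e02 then -t else 0)"

lemma apoly_vals: "apoly t e20 = t" "apoly t e11 = 2 * sqrt (t * (1 - t))" "apoly t e02 = -t"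
  unfolding apoly_def using e_distinct by auto

lemma apoly_ratio:
  assumes t: "1/2 \<le> t" "t \<le> 1"
  shows "phi t powr (3/4) \<le> hpoly_coef_norm 2 2 (apoly t) / hpoly_norm 2 2 (apoly t)"
    and "apoly t \<in> {a. \<exists>\<alpha>\<in>multi_idx 2 2. a \<alpha> \<noteq> 0}"
proof -
  have N1: "hpoly_norm 2 2 (apoly t) \<le> 1"
  proof (rule norm_le)
    fix x assume "x \<in> ubox"
    hence "\<bar>x 0\<bar> \<le> 1" "\<bar>x 1\<bar> \<le> 1" by (auto simp: ubox_def)
    thus "\<bar>hpoly_eval 2 2 (apoly t) x\<bar> \<le> 1" unfolding eval22 apoly_vals using poly_ext[OF t] by simp
  qed
  have Nt: "t \<le> hpoly_norm 2 2 (apoly t)" using norm_ge2[of 1 0 "apoly t"] t by (simp add: apoly_vals)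
  have c: "hpoly_coef_norm 2 2 (apoly t) = phi t powr (3/4)"
    unfolding coef22 apoly_vals phi_def using t by simp
  have "phi t powr (3/4) / 1 \<le> phi t powr (3/4) / hpoly_norm 2 2 (apoly t)"
    using N1 Nt t by (intro divide_left_mono) auto
  thus "phi t powr (3/4) \<le> hpoly_coef_norm 2 2 (apoly t) / hpoly_norm 2 2 (apoly t)" unfolding c by simp
  show "apoly t \<in> {a. \<exists>\<alpha>\<in>multi_idx 2 2. a \<alpha> \<noteq> 0}"
    using t by (auto simp: multi22 apoly_vals intro!: bexI[of _ e20])
qed

theorem mainTheorem7:
  shows "BH_const 2 \<ge> BH_const_n 2 2
    \<and> BH_const_n 2 2 = ereal (SUP t\<in>{1/2..1::real}.
          (2 * t powr (4/3) + (2 * sqrt (t * (1 - t))) powr (4/3)) powr (3/4))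
    \<and> \<bar>(SUP t\<in>{1/2..1::real}.
          (2 * t powr (4/3) + (2 * sqrt (t * (1 - t))) powr (4/3)) powr (3/4)) - 1.8374\<bar> < 0.00005"
proof -
  have fe: "(\<lambda>t::real. (2 * t powr (4/3) + (2 * sqrt (t * (1 - t))) powr (4/3)) powr (3/4))
      = (\<lambda>t. phi t powr (3/4))" by (simp add: phi_def)
  define S where "S = (SUP t\<in>{1/2..1::real}. phi t powr (3/4))"
  have ub: "phi t powr (3/4) \<le> (22505/10000) powr (3/4)" if "t \<in> {1/2..1}" for t
    using phi_upper[of t] that phi_nonneg[of t] by (intro powr_mono2) auto
  have bdd: "bdd_above ((\<lambda>t. phi t powr (3/4)) ` {1/2..1})"
    using ub by (intro bdd_aboveI2)
  have Sge: "phi t powr (3/4) \<le> S" if "t \<in> {1/2..1}" for t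
    unfolding S_def using that bdd by (rule cSUP_upper)
  have Sle: "S \<le> (22505/10000) powr (3/4)"
    unfolding S_def using ub by (intro cSUP_least) auto
  have p1: "BH_const 2 \<ge> BH_const_n 2 2"
    unfolding BH_const_def by (rule SUP_upper) simp
  have le1: "BH_const_n 2 2 \<le> ereal S"
    unfolding BH_const_n_def
    by (rule SUP_least) (use ratio_bound Sge in auto)
  have ge_t: "ereal (phi t powr (3/4)) \<le> BH_const_n 2 2" if "t \<in> {1/2..1}" for t
  proof -
    have "ereal (phi t powr (3/4)) \<le> ereal (hpoly_coef_norm 2 2 (apoly t) / hpoly_norm 2 2 (apoly t))"
      using apoly_ratio(1)[of t] that by simp
    also have "\<dots> \<le> BH_const_n 2 2"
      unfolding BH_const_n_def using apoly_ratio(2)[of t] that by (intro SUP_upper2) auto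
    finally show ?thesis .
  qed
  have ge1: "ereal S \<le> BH_const_n 2 2"
  proof (cases "BH_const_n 2 2")
    case (real b)
    have "S \<le> b" unfolding S_def
      by (rule cSUP_least) (use ge_t real in auto)
    thus ?thesis using real by simp
  next
    case PInf thus ?thesis by simp
  next
    case MInf thus ?thesis using ge_t[of 1] by simp
  qed
  have lo: "S > 1.83735"
  proof -
    have t: "(477/500::real)^3 \<in> {1/2..1}" by (simp add: power3_eq_cube)
    have "1.83735 \<le> (225038/100000::real) powr (3/4)" by (rule powr34_ge) (simp_all add: eval_nat_numeral)
    also have "\<dots> < phi ((477/500)^3) powr (3/4)" using phi_lower by (intro powr_less_mono2) auto
    also have "\<dots> \<le> S" using Sge[OF t] .
    finally show ?thesis .
  qed
  have hi: "S < 1.83745"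
  proof -
    have "(22505/10000::real) powr (3/4) < 1.83745" by (rule powr34_lt) (simp_all add: eval_nat_numeral)
    thus ?thesis using Sle by simp
  qed
  have ab1: "S - 1.8374 < 0.00005" using hi by simp
  have ab2: "- (S - 1.8374) < 0.00005" using lo by simp
  have ab: "\<bar>S - 1.8374\<bar> < 0.00005" using ab1 ab2 abs_less_iff by blast
  show ?thesis unfolding fe S_def[symmetric]
    using p1 le1 ge1 ab by auto
qed

end
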